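(* Let $d\ge 2$. There exists a constant $c\in(0,1)$ depending only on $d$ such that the following holds for every finite field $\mathbb F_q$ of characteristic greater than two. Let $E,F\subset \mathbb F_q^d$ with $(0,\ldots,0)\notin E$. Then $$|\Pi(E,F)|\ \ge\ c\,\min\left\{ q,\ \frac{|E|\,|F|^2}{q^{2d-1}\sum_{x\in \mathbb F_q^{d}\setminus\{0\}} \sum_{s\in\mathbb F_q^*}E(sx)\, |\widehat{F}(x)|^2}\right\},$$ where the second entry of the minimum is interpreted as $+\infty$ if the double sum in its denominator vanishes and $E$ is nonempty.
   Context: $\mathbb F_q$ is a finite field with $q$ elements and characteristic greater than two; $\mathbb F_q^*=\mathbb F_q\setminus\{0\}$. For $E,F\subset\mathbb F_q^d$, $\Pi(E,F)=\{x\cdot y: x\in E,\ y\in F\}\subset\mathbb F_q$, where $x\cdot y=\sum_i x_iy_i$. A set is identified with its indicator function, so $E(z)=1$ if $z\in E$ and $0$ otherwise. Fix a nontrivial additive character $\psi:\mathbb F_q\to\{u\in\mathbb C:|u|=1\}$; for $f:\mathbb F_q^d\to\mathbb C$ the Fourier transform is $\widehat f(m)=q^{-d}\sum_{x\in\mathbb F_q^d} f(x)\psi(-x\cdot m)$. *)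

theory Defs
  imports "HOL-Analysis.Analysis" "HOL-Algebra.Ring" "HOL-Library.FuncSet"
begin

definition alg_ring_char :: "('a, 'b) ring_scheme \<Rightarrow> nat" where
  "alg_ring_char R = (if \<exists>n::nat>0. [n] \<cdot>\<^bsub>R\<^esub> \<one>\<^bsub>R\<^esub> = \<zero>\<^bsub>R\<^esub>
                  then (LEAST n::nat. n > 0 \<and> [n] \<cdot>\<^bsub>R\<^esub> \<one>\<^bsub>R\<^esub> = \<zero>\<^bsub>R\<^esub>) else 0)"

definition vecs :: "('a, 'b) ring_scheme \<Rightarrow> nat \<Rightarrow> (nat \<Rightarrow> 'a) set" where
  "vecs R d = {..<d} \<rightarrow>\<^sub>E carrier R"

definition zero_vec :: "('a, 'b) ring_scheme \<Rightarrow> nat \<Rightarrow> (nat \<Rightarrow> 'a)" where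
  "zero_vec R d = (\<lambda>i\<in>{..<d}. \<zero>\<^bsub>R\<^esub>)"

definition smult_vec :: "('a, 'b) ring_scheme \<Rightarrow> nat \<Rightarrow> 'a \<Rightarrow> (nat \<Rightarrow> 'a) \<Rightarrow> (nat \<Rightarrow> 'a)" where
  "smult_vec R d s x = (\<lambda>i\<in>{..<d}. s \<otimes>\<^bsub>R\<^esub> x i)"

definition dot :: "('a, 'b) ring_scheme \<Rightarrow> nat \<Rightarrow> (nat \<Rightarrow> 'a) \<Rightarrow> (nat \<Rightarrow> 'a) \<Rightarrow> 'a" where
  "dot R d x y = (\<Oplus>\<^bsub>R\<^esub> i\<in>{..<d}. x i \<otimes>\<^bsub>R\<^esub> y i)"

definition dot_set :: "('a, 'b) ring_scheme \<Rightarrow> nat \<Rightarrow> (nat \<Rightarrow> 'a) set \<Rightarrow> (nat \<Rightarrow> 'a) set \<Rightarrow> 'a set" where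
  "dot_set R d E F = {dot R d x y | x y. x \<in> E \<and> y \<in> F}"

definition nontrivial_add_char :: "('a, 'b) ring_scheme \<Rightarrow> ('a \<Rightarrow> complex) \<Rightarrow> bool" where
  "nontrivial_add_char R \<psi> \<longleftrightarrow>
     (\<forall>a\<in>carrier R. \<forall>b\<in>carrier R. \<psi> (a \<oplus>\<^bsub>R\<^esub> b) = \<psi> a * \<psi> b) \<and>
     (\<forall>a\<in>carrier R. cmod (\<psi> a) = 1) \<and>
     (\<exists>a\<in>carrier R. \<psi> a \<noteq> 1)"

definition fourier :: "('a, 'b) ring_scheme \<Rightarrow> nat \<Rightarrow> ('a \<Rightarrow> complex)
    \<Rightarrow> ((nat \<Rightarrow> 'a) \<Rightarrow> complex) \<Rightarrow> (nat \<Rightarrow> 'a) \<Rightarrow> complex" where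
  "fourier R d \<psi> f m =
     (\<Sum>x\<in>vecs R d. f x * \<psi> (\<ominus>\<^bsub>R\<^esub> dot R d x m)) / of_nat (card (carrier R)) ^ d"

definition ind :: "'c set \<Rightarrow> 'c \<Rightarrow> complex" where
  "ind A z = (if z \<in> A then 1 else 0)"

end

theory Submission
  imports Defs
begin

lemma final_arith:
  fixes X q t e f S :: real
  assumes q: "q > 0" and t: "t > 0" and S: "S > 0" and e: "e > 0" and f: "f > 0" and X: "X \<ge> 0"
    and main: "(e * f)\<^sup>2 \<le> X * ((e * f)\<^sup>2 / q + t * e * S)"
  shows "X \<ge> 1 / 2 * min q (e * f ^ 2 / (t * S))"
proof -
  define N2 where "N2 = (e * f)\<^sup>2"
  have N2: "N2 > 0" unfolding N2_def using e f by simp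
  show ?thesis
  proof (cases "N2 / q \<ge> t * e * S")
    case True
    then have "N2 \<le> X * (2 * (N2 / q))" using main X unfolding N2_def[symmetric]
      by (smt (verit) mult_left_mono)
    then have "N2 * q \<le> 2 * X * N2" using q by (simp add: field_simps)
    then have "q \<le> 2 * X" using N2 by (simp add: mult.commute)
    then show ?thesis by simp
  next
    case False
    then have "N2 \<le> X * (2 * (t * e * S))" using main X unfolding N2_def[symmetric]
      by (smt (verit) mult_left_mono)
    then have "N2 / (t * e * S) \<le> 2 * X" using t e S by (simp add: field_simps)
    moreover have "N2 / (t * e * S) = e * f ^ 2 / (t * S)" unfolding N2_def using e
      by (simp add: power2_eq_square field_simps)
    ultimately show ?thesis by simp
  qed
qed

lemma collision_CS:
  fixes g :: "'p \<Rightarrow> 'c" and P :: "'p set"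
  assumes "finite P"
  shows "(real (card P))\<^sup>2 \<le> real (card (g ` P)) *
     (\<Sum>p\<in>P. \<Sum>p'\<in>P. if g p = g p' then 1 else 0)"
proof -
  define n where "n t = real (card {p\<in>P. g p = t})" for t
  have "real (card P) = (\<Sum>p\<in>P. 1)" by simp
  also have "\<dots> = (\<Sum>t\<in>g ` P. \<Sum>p\<in>{x\<in>P. g x = t}. 1)"
    using assms by (rule sum.image_gen)
  also have "\<dots> = (\<Sum>t\<in>g ` P. n t)" by (simp add: n_def)
  finally have N: "real (card P) = (\<Sum>t\<in>g ` P. n t)" .
  have inner: "(\<Sum>p'\<in>P. if g p = g p' then 1 else 0) = n (g p)" for p
  proof -
    have "(\<Sum>p'\<in>P. if g p = g p' then 1 else (0::real)) = (\<Sum>p'\<in>P \<inter> {p'. g p' = g p}. 1)"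
      using assms by (subst sum.inter_restrict) (auto intro!: sum.cong)
    also have "P \<inter> {p'. g p' = g p} = {x\<in>P. g x = g p}" by auto
    finally show ?thesis by (simp add: n_def)
  qed
  have "(\<Sum>p\<in>P. \<Sum>p'\<in>P. if g p = g p' then 1 else 0) = (\<Sum>p\<in>P. n (g p))"
    by (simp add: inner)
  also have "\<dots> = (\<Sum>t\<in>g ` P. \<Sum>p\<in>{x\<in>P. g x = t}. n (g p))"
    using assms by (rule sum.image_gen)
  also have "\<dots> = (\<Sum>t\<in>g ` P. (n t)\<^sup>2)"
    by (rule sum.cong) (auto simp: n_def power2_eq_square)
  finally have C: "(\<Sum>p\<in>P. \<Sum>p'\<in>P. if g p = g p' then 1 else 0) = (\<Sum>t\<in>g ` P. (n t)\<^sup>2)" .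
  show ?thesis unfolding N C using sum_squared_le_sum_of_squares[of n "g ` P"]
    by (simp add: mult.commute)
qed

context field
begin

lemma psi_zero:
  assumes "nontrivial_add_char R \<psi>"
  shows "\<psi> \<zero> = 1"
proof -
  have h: "\<psi> \<zero> = \<psi> \<zero> * \<psi> \<zero>" using assms unfolding nontrivial_add_char_def
    by (metis l_zero zero_closed)
  have "cmod (\<psi> \<zero>) = 1" using assms unfolding nontrivial_add_char_def by auto
  then have "\<psi> \<zero> \<noteq> 0" by auto
  with h show ?thesis by (metis mult_cancel_right1)
qed

lemma psi_neg:
  assumes "nontrivial_add_char R \<psi>" "a \<in> carrier R"
  shows "\<psi> (\<ominus> a) = cnj (\<psi> a)"
proof -
  have "\<psi> a * \<psi> (\<ominus> a) = 1" using assms psi_zero[OF assms(1)] unfolding nontrivial_add_char_def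
    by (metis a_inv_closed r_neg)
  moreover have "\<psi> a * cnj (\<psi> a) = 1" using assms unfolding nontrivial_add_char_def
    by (metis complex_norm_square mult.commute of_real_1 one_power2 complex_mult_cnj)
  ultimately show ?thesis
    by (metis mult.left_commute mult.right_neutral mult.commute)
qed

lemma psi_sum0:
  assumes "nontrivial_add_char R \<psi>" "finite (carrier R)"
  shows "(\<Sum>s\<in>carrier R. \<psi> s) = 0"
proof -
  obtain b where b: "b \<in> carrier R" "\<psi> b \<noteq> 1" using assms unfolding nontrivial_add_char_def by auto
  have "(\<Sum>s\<in>carrier R. \<psi> s) = (\<Sum>s\<in>carrier R. \<psi> (b \<oplus> s))"
    by (rule sum.reindex_bij_witness[where j="\<lambda>s. \<ominus> b \<oplus> s" and i="\<lambda>s. b \<oplus> s"])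
       (use b in \<open>auto simp: a_assoc[symmetric] l_neg r_neg\<close>)
  also have "\<dots> = \<psi> b * (\<Sum>s\<in>carrier R. \<psi> s)"
    using assms b unfolding nontrivial_add_char_def by (simp add: sum_distrib_left)
  finally have "(1 - \<psi> b) * (\<Sum>s\<in>carrier R. \<psi> s) = 0" by (simp add: algebra_simps)
  with b show ?thesis by simp
qed

lemma psi_orth:
  assumes "nontrivial_add_char R \<psi>" "finite (carrier R)" "a \<in> carrier R"
  shows "(\<Sum>s\<in>carrier R. \<psi> (s \<otimes> a)) = (if a = \<zero> then of_nat (card (carrier R)) else 0)"
proof (cases "a = \<zero>")
  case True
  then show ?thesis using psi_zero[OF assms(1)] by simp
next
  case False
  then have aU: "a \<in> Units R" using assms field_Units by auto
  have "(\<Sum>s\<in>carrier R. \<psi> (s \<otimes> a)) = (\<Sum>s\<in>carrier R. \<psi> s)"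
    by (rule sum.reindex_bij_witness[where i="\<lambda>s. s \<otimes> inv a" and j="\<lambda>s. s \<otimes> a"])
       (use aU assms(3) in \<open>auto simp: m_assoc\<close>)
  then show ?thesis using psi_sum0[OF assms(1,2)] False by simp
qed

lemma minus_zero_iff: "a \<in> carrier R \<Longrightarrow> b \<in> carrier R \<Longrightarrow> (a \<ominus> b = \<zero>) = (a = b)"
proof
  assume a: "a \<in> carrier R" "b \<in> carrier R" "a \<ominus> b = \<zero>"
  then have "a = \<ominus> (\<ominus> b)" using sum_zero_eq_neg[of a "\<ominus> b"] by (simp add: minus_eq)
  then show "a = b" using a by simp
next
  assume "a \<in> carrier R" "b \<in> carrier R" "a = b"
  then show "a \<ominus> b = \<zero>" by (simp add: minus_eq r_neg)
qed

lemma psi_eq: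
  assumes "nontrivial_add_char R \<psi>" "finite (carrier R)" "a \<in> carrier R" "b \<in> carrier R"
  shows "(if a = b then 1 else 0) =
    (\<Sum>s\<in>carrier R. \<psi> (s \<otimes> a) * cnj (\<psi> (s \<otimes> b))) / of_nat (card (carrier R))"
proof -
  have q: "card (carrier R) > 0" using assms(2) zero_closed by (auto simp: card_gt_0_iff)
  have "(\<Sum>s\<in>carrier R. \<psi> (s \<otimes> a) * cnj (\<psi> (s \<otimes> b))) = (\<Sum>s\<in>carrier R. \<psi> (s \<otimes> (a \<ominus> b)))"
  proof (rule sum.cong[OF refl])
    fix s assume s: "s \<in> carrier R"
    have "\<psi> (s \<otimes> a) * cnj (\<psi> (s \<otimes> b)) = \<psi> (s \<otimes> a) * \<psi> (\<ominus> (s \<otimes> b))"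
      using psi_neg[OF assms(1)] s assms by simp
    also have "\<dots> = \<psi> (s \<otimes> a \<oplus> \<ominus> (s \<otimes> b))"
      using assms(1) s assms(3,4) unfolding nontrivial_add_char_def by simp
    also have "s \<otimes> a \<oplus> \<ominus> (s \<otimes> b) = s \<otimes> (a \<ominus> b)"
      using s assms by (simp add: minus_eq r_distr r_minus)
    finally show "\<psi> (s \<otimes> a) * cnj (\<psi> (s \<otimes> b)) = \<psi> (s \<otimes> (a \<ominus> b))" .
  qed
  also have "\<dots> = (if a \<ominus> b = \<zero> then of_nat (card (carrier R)) else 0)"
    using psi_orth[OF assms(1,2)] assms by simp
  finally show ?thesis using q assms(3,4) by (auto simp: minus_zero_iff)
qed

lemma smult_closed: "c \<in> carrier R \<Longrightarrow> x \<in> vecs R d \<Longrightarrow> smult_vec R d c x \<in> vecs R d"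
  unfolding smult_vec_def vecs_def by auto

lemma smult_smult: "a \<in> carrier R \<Longrightarrow> b \<in> carrier R \<Longrightarrow> x \<in> vecs R d \<Longrightarrow>
   smult_vec R d a (smult_vec R d b x) = smult_vec R d (a \<otimes> b) x"
  unfolding smult_vec_def vecs_def by (auto simp: m_assoc PiE_iff)

lemma smult_one: "x \<in> vecs R d \<Longrightarrow> smult_vec R d \<one> x = x"
  unfolding smult_vec_def vecs_def by (auto simp: PiE_iff extensional_def)

lemma smult_zero: "a \<in> carrier R \<Longrightarrow> smult_vec R d a (zero_vec R d) = zero_vec R d"
  unfolding smult_vec_def zero_vec_def by auto

lemma zero_vec_in: "zero_vec R d \<in> vecs R d"
  unfolding zero_vec_def vecs_def by auto

lemma dot_closed: "x \<in> vecs R d \<Longrightarrow> y \<in> vecs R d \<Longrightarrow> dot R d x y \<in> carrier R"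
  unfolding dot_def vecs_def by (auto intro!: finsum_closed simp: PiE_iff)

lemma dot_comm: "x \<in> vecs R d \<Longrightarrow> y \<in> vecs R d \<Longrightarrow> dot R d x y = dot R d y x"
  unfolding dot_def vecs_def by (auto intro!: finsum_cong simp: PiE_iff m_comm)

lemma dot_smult: "c \<in> carrier R \<Longrightarrow> x \<in> vecs R d \<Longrightarrow> y \<in> vecs R d \<Longrightarrow>
   dot R d y (smult_vec R d c x) = c \<otimes> dot R d x y"
proof -
  assume c: "c \<in> carrier R" and x: "x \<in> vecs R d" and y: "y \<in> vecs R d"
  have "dot R d y (smult_vec R d c x) = (\<Oplus>i\<in>{..<d}. c \<otimes> (y i \<otimes> x i))"
    unfolding dot_def smult_vec_def using c x y unfolding vecs_def
    by (auto intro!: finsum_cong simp: PiE_iff m_lcomm)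
  also have "\<dots> = c \<otimes> dot R d y x"
    unfolding dot_def using c x y unfolding vecs_def
    by (subst finsum_rdistr) (auto simp: PiE_iff)
  finally show ?thesis using dot_comm x y by simp
qed

lemma fourier_sum:
  assumes "nontrivial_add_char R \<psi>" "finite (carrier R)" "F \<subseteq> vecs R d"
    "s \<in> carrier R" "x \<in> vecs R d"
  shows "(\<Sum>y\<in>F. \<psi> (s \<otimes> dot R d x y)) =
     of_nat (card (carrier R)) ^ d * fourier R d \<psi> (ind F) (smult_vec R d (\<ominus> s) x)"
proof -
  have q: "card (carrier R) > 0" using assms(2) zero_closed by (auto simp: card_gt_0_iff)
  have finV: "finite (vecs R d)" unfolding vecs_def using assms(2) by (simp add: finite_PiE)
  let ?m = "smult_vec R d (\<ominus> s) x"
  have "(\<Sum>y\<in>vecs R d. ind F y * \<psi> (\<ominus> dot R d y ?m)) = (\<Sum>y\<in>vecs R d. if y \<in> F then \<psi> (\<ominus> dot R d y ?m) else 0)"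
    by (auto simp: ind_def intro!: sum.cong)
  also have "\<dots> = (\<Sum>y\<in>vecs R d \<inter> F. \<psi> (\<ominus> dot R d y ?m))"
    using finV by (simp add: sum.inter_restrict)
  also have "\<dots> = (\<Sum>y\<in>F. \<psi> (s \<otimes> dot R d x y))"
  proof (rule sum.cong)
    show "vecs R d \<inter> F = F" using assms(3) by auto
  next
    fix y assume "y \<in> F"
    then have yV: "y \<in> vecs R d" using assms(3) by auto
    have "\<ominus> dot R d y ?m = \<ominus> (\<ominus> s \<otimes> dot R d x y)"
      using dot_smult[of "\<ominus> s" x d y] assms yV by simp
    also have "\<dots> = s \<otimes> dot R d x y"
      using assms yV dot_closed[of x d y] by (simp add: l_minus)
    finally show "\<psi> (\<ominus> dot R d y ?m) = \<psi> (s \<otimes> dot R d x y)" by simp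
  qed
  finally show ?thesis unfolding fourier_def using q by simp
qed

lemma S_reindex:
  assumes "finite (carrier R)" "E \<subseteq> vecs R d" "zero_vec R d \<notin> E"
  shows "(\<Sum>s\<in>carrier R - {\<zero>}. \<Sum>x\<in>E. f (smult_vec R d (\<ominus> s) x)) =
     (\<Sum>x\<in>vecs R d - {zero_vec R d}. \<Sum>s\<in>carrier R - {\<zero>}.
                   Re (ind E (smult_vec R d s x)) * f x)"
proof -
  have finV: "finite (vecs R d)" unfolding vecs_def using assms(1) by (simp add: finite_PiE)
  have finE: "finite E" using finV assms(2) finite_subset by blast
  let ?Q = "{(m, t). m \<in> vecs R d - {zero_vec R d} \<and> t \<in> carrier R - {\<zero>} \<and> smult_vec R d t m \<in> E}"
  have "(\<Sum>x\<in>vecs R d - {zero_vec R d}. \<Sum>s\<in>carrier R - {\<zero>}.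
                   Re (ind E (smult_vec R d s x)) * f x)
     = (\<Sum>(x,s)\<in>(vecs R d - {zero_vec R d}) \<times> (carrier R - {\<zero>}).
                   if (x, s) \<in> ?Q then f x else 0)"
    by (subst sum.cartesian_product) (auto intro!: sum.cong simp: ind_def split: if_splits)
  also have "\<dots> = (\<Sum>(x,s)\<in>?Q. f x)"
  proof -
    let ?A = "(vecs R d - {zero_vec R d}) \<times> (carrier R - {\<zero>})"
    have "(\<Sum>(x,s)\<in>?A. if (x, s) \<in> ?Q then f x else 0) = (\<Sum>p\<in>?A. if p \<in> ?Q then (\<lambda>(x,s). f x) p else 0)"
      by (rule sum.cong) auto
    also have "\<dots> = (\<Sum>p\<in>?A \<inter> ?Q. (\<lambda>(x,s). f x) p)"
      using finV assms(1) by (simp add: sum.inter_restrict)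
    also have "?A \<inter> ?Q = ?Q" by auto
    finally show ?thesis by (rule arg_cong)
  qed
  also have "(\<Sum>(x,s)\<in>?Q. f x) = (\<Sum>(s,x)\<in>(carrier R - {\<zero>}) \<times> E. f (smult_vec R d (\<ominus> s) x))"
  proof (rule sym, rule sum.reindex_bij_witness[where i="\<lambda>(m,t). (\<ominus> (inv t), smult_vec R d t m)"
        and j="\<lambda>(s,x). (smult_vec R d (\<ominus> s) x, inv (\<ominus> s))"])
    fix a assume "a \<in> (carrier R - {\<zero>}) \<times> E"
    then obtain s x where a: "a = (s, x)" "s \<in> carrier R" "s \<noteq> \<zero>" "x \<in> E" by auto
    have x: "x \<in> vecs R d" using a assms(2) by auto
    have ns: "\<ominus> s \<in> Units R" using a field_Units by auto
    have nsc: "\<ominus> s \<in> carrier R" using a by simp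
    have ins: "inv (\<ominus> s) \<in> carrier R" "inv (\<ominus> s) \<noteq> \<zero>"
      using ns field_Units by auto
    have bk: "smult_vec R d (inv (\<ominus> s)) (smult_vec R d (\<ominus> s) x) = x"
      using ns x nsc ins by (simp add: smult_smult smult_one Units_l_inv)
    show "(\<lambda>(m,t). (\<ominus> (inv t), smult_vec R d t m)) ((\<lambda>(s,x). (smult_vec R d (\<ominus> s) x, inv (\<ominus> s))) a) = a"
      using a ns bk by simp
    show "(\<lambda>(s,x). (smult_vec R d (\<ominus> s) x, inv (\<ominus> s))) a \<in> ?Q"
    proof -
      have "smult_vec R d (\<ominus> s) x \<noteq> zero_vec R d"
      proof
        assume "smult_vec R d (\<ominus> s) x = zero_vec R d"
        then have "x = zero_vec R d" using bk ins smult_zero by metis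
        then show False using a assms(3) by simp
      qed
      then show ?thesis using a ins bk x nsc smult_closed by auto
    qed
    show "(\<lambda>(x,s). f x) ((\<lambda>(s,x). (smult_vec R d (\<ominus> s) x, inv (\<ominus> s))) a) = (\<lambda>(s,x). f (smult_vec R d (\<ominus> s) x)) a"
      using a by simp
  next
    fix b assume "b \<in> ?Q"
    then obtain m t where b: "b = (m, t)" "m \<in> vecs R d" "m \<noteq> zero_vec R d" "t \<in> carrier R" "t \<noteq> \<zero>"
      "smult_vec R d t m \<in> E" by auto
    have tU: "t \<in> Units R" using b field_Units by auto
    show "(\<lambda>(s,x). (smult_vec R d (\<ominus> s) x, inv (\<ominus> s))) ((\<lambda>(m,t). (\<ominus> (inv t), smult_vec R d t m)) b) = b"
      using b tU by (simp add: smult_smult smult_one)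
    show "(\<lambda>(m,t). (\<ominus> (inv t), smult_vec R d t m)) b \<in> (carrier R - {\<zero>}) \<times> E"
      using b tU field_Units by auto
  qed
  also have "\<dots> = (\<Sum>s\<in>carrier R - {\<zero>}. \<Sum>x\<in>E. f (smult_vec R d (\<ominus> s) x))"
    by (simp add: sum.cartesian_product)
  finally show ?thesis by simp
qed
end

lemma collision_char:
  assumes R: "field R" and psi: "nontrivial_add_char R \<psi>" and fin: "finite (carrier R)"
    and gK: "\<And>p. p \<in> P \<Longrightarrow> g p \<in> carrier R" and finP: "finite P"
  shows "(\<Sum>p\<in>P. \<Sum>p'\<in>P. if g p = g p' then 1 else 0) =
    (\<Sum>s\<in>carrier R. (cmod (\<Sum>p\<in>P. \<psi> (s \<otimes>\<^bsub>R\<^esub> g p)))\<^sup>2) / real (card (carrier R))"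
proof -
  let ?q = "of_nat (card (carrier R)) :: complex"
  have "complex_of_real (\<Sum>p\<in>P. \<Sum>p'\<in>P. if g p = g p' then 1 else 0)
     = (\<Sum>p\<in>P. \<Sum>p'\<in>P. (if g p = g p' then 1 else 0))"
    unfolding of_real_sum by (intro sum.cong refl) simp
  also have "\<dots> = (\<Sum>p\<in>P. \<Sum>p'\<in>P. (\<Sum>s\<in>carrier R. \<psi> (s \<otimes>\<^bsub>R\<^esub> g p) * cnj (\<psi> (s \<otimes>\<^bsub>R\<^esub> g p'))) / ?q)"
    by (intro sum.cong refl field.psi_eq[OF R psi fin] gK)
  also have "\<dots> = (\<Sum>p\<in>P. \<Sum>p'\<in>P. \<Sum>s\<in>carrier R. \<psi> (s \<otimes>\<^bsub>R\<^esub> g p) * cnj (\<psi> (s \<otimes>\<^bsub>R\<^esub> g p'))) / ?q"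
    by (simp only: sum_divide_distrib)
  also have "\<dots> = (\<Sum>s\<in>carrier R. \<Sum>p\<in>P. \<Sum>p'\<in>P. \<psi> (s \<otimes>\<^bsub>R\<^esub> g p) * cnj (\<psi> (s \<otimes>\<^bsub>R\<^esub> g p'))) / ?q"
  proof -
    have "(\<Sum>p\<in>P. \<Sum>p'\<in>P. \<Sum>s\<in>carrier R. \<psi> (s \<otimes>\<^bsub>R\<^esub> g p) * cnj (\<psi> (s \<otimes>\<^bsub>R\<^esub> g p')))
     = (\<Sum>p\<in>P. \<Sum>s\<in>carrier R. \<Sum>p'\<in>P. \<psi> (s \<otimes>\<^bsub>R\<^esub> g p) * cnj (\<psi> (s \<otimes>\<^bsub>R\<^esub> g p')))"
      by (rule sum.cong[OF refl], rule sum.swap[where A=P and B="carrier R"])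
    also have "\<dots> = (\<Sum>s\<in>carrier R. \<Sum>p\<in>P. \<Sum>p'\<in>P. \<psi> (s \<otimes>\<^bsub>R\<^esub> g p) * cnj (\<psi> (s \<otimes>\<^bsub>R\<^esub> g p')))"
      by (rule sum.swap[where g="\<lambda>p s. \<Sum>p'\<in>P. \<psi> (s \<otimes>\<^bsub>R\<^esub> g p) * cnj (\<psi> (s \<otimes>\<^bsub>R\<^esub> g p'))" and A=P and B="carrier R"])
    finally show ?thesis by (rule arg_cong)
  qed
  also have "\<dots> = (\<Sum>s\<in>carrier R. (\<Sum>p\<in>P. \<psi> (s \<otimes>\<^bsub>R\<^esub> g p)) * cnj (\<Sum>p\<in>P. \<psi> (s \<otimes>\<^bsub>R\<^esub> g p))) / ?q"
    by (simp only: cnj_sum sum_product)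
  also have "\<dots> = complex_of_real ((\<Sum>s\<in>carrier R. (cmod (\<Sum>p\<in>P. \<psi> (s \<otimes>\<^bsub>R\<^esub> g p)))\<^sup>2) / real (card (carrier R)))"
    unfolding of_real_divide of_real_sum complex_norm_square cnj_sum by simp
  finally show ?thesis using of_real_eq_iff by blast
qed

context field
begin
lemma main_ineq:
  assumes fin: "finite (carrier R)" and psi: "nontrivial_add_char R \<psi>"
    and EV: "E \<subseteq> vecs R d" and FV: "F \<subseteq> vecs R d" and E0: "zero_vec R d \<notin> E" and d1: "d \<ge> 1"
  defines "q \<equiv> real (card (carrier R))"
    and "S \<equiv> (\<Sum>x\<in>vecs R d - {zero_vec R d}. \<Sum>s\<in>carrier R - {\<zero>\<^bsub>R\<^esub>}.
                   Re (ind E (smult_vec R d s x)) * (cmod (fourier R d \<psi> (ind F) x))\<^sup>2)"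
    and "N \<equiv> real (card E) * real (card F)"
  shows "N\<^sup>2 \<le> real (card (dot_set R d E F)) * (N\<^sup>2 / q + q ^ (2 * d - 1) * real (card E) * S)"
proof -
  have finV: "finite (vecs R d)" unfolding vecs_def using fin by (simp add: finite_PiE)
  have finE: "finite E" and finF: "finite F" using finV EV FV finite_subset by blast+
  let ?P = "E \<times> F"
  let ?g = "\<lambda>(x,y). dot R d x y"
  have finP: "finite ?P" using finE finF by simp
  have NP: "N = real (card ?P)" unfolding N_def by (simp add: card_cartesian_product)
  have img: "?g ` ?P = dot_set R d E F" unfolding dot_set_def by auto
  have qpos: "q > 0" unfolding q_def using fin zero_closed by (auto simp: card_gt_0_iff)
  have gK: "?g p \<in> carrier R" if "p \<in> ?P" for p
    using that EV FV by (auto intro!: dot_closed)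
  define A where "A s = (\<Sum>p\<in>?P. \<psi> (s \<otimes> ?g p))" for s
  define C where "C = (\<Sum>p\<in>?P. \<Sum>p'\<in>?P. if ?g p = ?g p' then 1 else (0::real))"
  have CS: "N\<^sup>2 \<le> real (card (dot_set R d E F)) * C"
    unfolding NP C_def img[symmetric] by (rule collision_CS[OF finP])
  have Cchar: "C = (\<Sum>s\<in>carrier R. (cmod (A s))\<^sup>2) / q"
    unfolding C_def A_def q_def by (rule collision_char[OF field_axioms psi fin gK finP])
  have A0: "A \<zero> = of_real N"
    unfolding A_def NP using psi_zero[OF psi] gK by simp
  define f where "f m = (cmod (fourier R d \<psi> (ind F) m))\<^sup>2" for m
  have As: "(cmod (A s))\<^sup>2 \<le> q ^ (2 * d) * real (card E) * (\<Sum>x\<in>E. f (smult_vec R d (\<ominus> s) x))"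
    if s: "s \<in> carrier R" for s
  proof -
    have "A s = (\<Sum>x\<in>E. \<Sum>y\<in>F. \<psi> (s \<otimes> dot R d x y))"
      unfolding A_def by (simp add: sum.cartesian_product case_prod_beta)
    also have "\<dots> = (\<Sum>x\<in>E. of_nat (card (carrier R)) ^ d * fourier R d \<psi> (ind F) (smult_vec R d (\<ominus> s) x))"
      using fourier_sum[OF psi fin FV s] EV by (intro sum.cong) auto
    also have "\<dots> = of_real (q ^ d) * (\<Sum>x\<in>E. fourier R d \<psi> (ind F) (smult_vec R d (\<ominus> s) x))"
      unfolding q_def by (simp add: sum_distrib_left)
    finally have "cmod (A s) = q ^ d * cmod (\<Sum>x\<in>E. fourier R d \<psi> (ind F) (smult_vec R d (\<ominus> s) x))"
      using qpos by (simp add: norm_mult norm_power)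
    also have "\<dots> \<le> q ^ d * (\<Sum>x\<in>E. cmod (fourier R d \<psi> (ind F) (smult_vec R d (\<ominus> s) x)))"
      using qpos by (intro mult_left_mono norm_sum) auto
    finally have "(cmod (A s))\<^sup>2 \<le> (q ^ d * (\<Sum>x\<in>E. cmod (fourier R d \<psi> (ind F) (smult_vec R d (\<ominus> s) x))))\<^sup>2"
      by (intro power_mono) auto
    also have "\<dots> = q ^ (2 * d) * (\<Sum>x\<in>E. cmod (fourier R d \<psi> (ind F) (smult_vec R d (\<ominus> s) x)))\<^sup>2"
      by (simp add: power_mult_distrib power_mult[symmetric] mult.commute)
    also have "\<dots> \<le> q ^ (2 * d) * ((\<Sum>x\<in>E. f (smult_vec R d (\<ominus> s) x)) * real (card E))"
      unfolding f_def using qpos by (intro mult_left_mono sum_squared_le_sum_of_squares) auto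
    finally show ?thesis by (simp add: mult_ac)
  qed
  have "(\<Sum>s\<in>carrier R. (cmod (A s))\<^sup>2) = (cmod (A \<zero>))\<^sup>2 + (\<Sum>s\<in>carrier R - {\<zero>}. (cmod (A s))\<^sup>2)"
    using fin zero_closed by (rule sum.remove)
  also have "\<dots> \<le> N\<^sup>2 + (\<Sum>s\<in>carrier R - {\<zero>}. q ^ (2 * d) * real (card E) * (\<Sum>x\<in>E. f (smult_vec R d (\<ominus> s) x)))"
    unfolding A0 by (intro add_mono sum_mono As) auto
  also have "(\<Sum>s\<in>carrier R - {\<zero>}. q ^ (2 * d) * real (card E) * (\<Sum>x\<in>E. f (smult_vec R d (\<ominus> s) x)))
      = q ^ (2 * d) * real (card E) * S"
    unfolding S_def using S_reindex[OF fin EV E0, of f] by (simp add: sum_distrib_left[symmetric] f_def)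
  finally have "C \<le> (N\<^sup>2 + q ^ (2 * d) * real (card E) * S) / q"
    unfolding Cchar using qpos by (simp add: divide_right_mono)
  also have "\<dots> = N\<^sup>2 / q + q ^ (2 * d - 1) * real (card E) * S"
  proof -
    have "q ^ (2 * d) = q * q ^ (2 * d - 1)" using d1 by (simp add: power_eq_if)
    then show ?thesis using qpos by (simp add: field_simps)
  qed
  finally have "C \<le> N\<^sup>2 / q + q ^ (2 * d - 1) * real (card E) * S" .
  then show ?thesis using CS by (meson mult_left_mono of_nat_0_le_iff order_trans)
qed

end

theorem lemma2p1:
  fixes d :: nat
  assumes "d \<ge> 2"
  shows "\<exists>c::real. 0 < c \<and> c < 1 \<and>
    (\<forall>(R :: ('a, 'b) ring_scheme) (\<psi> :: 'a \<Rightarrow> complex) E F.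
       field R \<and> finite (carrier R) \<and> alg_ring_char R > 2 \<and>
       nontrivial_add_char R \<psi> \<and>
       E \<subseteq> vecs R d \<and> F \<subseteq> vecs R d \<and> zero_vec R d \<notin> E \<longrightarrow>
       (let q = real (card (carrier R));
            S = (\<Sum>x\<in>vecs R d - {zero_vec R d}. \<Sum>s\<in>carrier R - {\<zero>\<^bsub>R\<^esub>}.
                   Re (ind E (smult_vec R d s x)) * (cmod (fourier R d \<psi> (ind F) x))\<^sup>2)
        in real (card (dot_set R d E F)) \<ge>
             c * (if S = 0 then (if E \<noteq> {} \<and> F \<noteq> {} then q else 0)
                  else min q (real (card E) * real (card F) ^ 2 / (q ^ (2 * d - 1) * S)))))"
proof (intro exI[of _ "1/2"] conjI allI impI)
  fix R :: "('a, 'b) ring_scheme" and \<psi> :: "'a \<Rightarrow> complex" and E F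
  assume H: "field R \<and> finite (carrier R) \<and> alg_ring_char R > 2 \<and>
       nontrivial_add_char R \<psi> \<and>
       E \<subseteq> vecs R d \<and> F \<subseteq> vecs R d \<and> zero_vec R d \<notin> E"
  then have fR: "field R" and fin: "finite (carrier R)" and psi: "nontrivial_add_char R \<psi>"
    and EV: "E \<subseteq> vecs R d" and FV: "F \<subseteq> vecs R d" and E0: "zero_vec R d \<notin> E" by auto
  have d1: "d \<ge> 1" using assms by simp
  define q where "q = real (card (carrier R))"
  define S where "S = (\<Sum>x\<in>vecs R d - {zero_vec R d}. \<Sum>s\<in>carrier R - {\<zero>\<^bsub>R\<^esub>}.
                   Re (ind E (smult_vec R d s x)) * (cmod (fourier R d \<psi> (ind F) x))\<^sup>2)"
  define X where "X = real (card (dot_set R d E F))"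
  have main: "(real (card E) * real (card F))\<^sup>2 \<le> X * ((real (card E) * real (card F))\<^sup>2 / q
      + q ^ (2 * d - 1) * real (card E) * S)"
    using field.main_ineq[OF fR fin psi EV FV E0 d1] unfolding q_def S_def X_def .
  have finV: "finite (vecs R d)" unfolding vecs_def using fin by (simp add: finite_PiE)
  have finE: "finite E" and finF: "finite F" using finV EV FV finite_subset by blast+
  have z: "\<zero>\<^bsub>R\<^esub> \<in> carrier R" using fR by (simp add: field.is_ring ring.ring_simprules(2))
  have qpos: "q > 0" unfolding q_def using fin z by (auto simp: card_gt_0_iff)
  have S0: "S \<ge> 0" unfolding S_def by (intro sum_nonneg) (auto simp: ind_def)
  have X0: "X \<ge> 0" unfolding X_def by simp
  have G: "X \<ge> 1/2 * (if S = 0 then (if E \<noteq> {} \<and> F \<noteq> {} then q else 0)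
                  else min q (real (card E) * real (card F) ^ 2 / (q ^ (2 * d - 1) * S)))"
  proof (cases "S = 0")
    case True
    show ?thesis
    proof (cases "E \<noteq> {} \<and> F \<noteq> {}")
      case ne: True
      have N: "(real (card E) * real (card F))\<^sup>2 > 0" using ne finE finF by (simp add: card_gt_0_iff)
      have "(real (card E) * real (card F))\<^sup>2 \<le> X * (real (card E) * real (card F))\<^sup>2 / q"
        using main True by simp
      then have "(real (card E) * real (card F))\<^sup>2 * q \<le> X * (real (card E) * real (card F))\<^sup>2"
        using qpos by (simp add: field_simps)
      then have "q \<le> X" using N by (simp add: mult.commute)
      then show ?thesis using True ne qpos by simp
    next
      case False
      then show ?thesis using True X0 by auto
    qed
  next
    case False
    then have Sp: "S > 0" using S0 by simp
    show ?thesis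
    proof (cases "E = {} \<or> F = {}")
      case True
      then show ?thesis using False X0 qpos by auto
    next
      case ne: False
      have e: "real (card E) > 0" and f: "real (card F) > 0" using ne finE finF by (auto simp: card_gt_0_iff)
      have "X \<ge> 1 / 2 * min q (real (card E) * real (card F) ^ 2 / (q ^ (2 * d - 1) * S))"
        by (rule final_arith[OF qpos _ Sp e f X0 main]) (use qpos in simp)
      then show ?thesis using False by simp
    qed
  qed
  show "let q = real (card (carrier R));
            S = (\<Sum>x\<in>vecs R d - {zero_vec R d}. \<Sum>s\<in>carrier R - {\<zero>\<^bsub>R\<^esub>}.
                   Re (ind E (smult_vec R d s x)) * (cmod (fourier R d \<psi> (ind F) x))\<^sup>2)
        in real (card (dot_set R d E F)) \<ge>
             1/2 * (if S = 0 then (if E \<noteq> {} \<and> F \<noteq> {} then q else 0)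
                  else min q (real (card E) * real (card F) ^ 2 / (q ^ (2 * d - 1) * S)))"
    using G unfolding Let_def q_def S_def X_def .
qed (simp_all)

end
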